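(* There exists an absolute constant $c > 0$ such that for every even $n \in \mathbb{N}$ and every integer $m \geqslant \sqrt{n}$, the number of sum-free subsets of $[n]$ of size $m$ is at least $2^{cn/m} \binom{n/2}{m}$.
   Context: $[n] = \{1,\ldots,n\}$. A set of integers is sum-free if it contains no $x,y,z$ (not necessarily distinct) with $x+y=z$. The paper writes the conclusion as $2^{\Omega(n/m)}\binom{n/2}{m}$, with $\Omega(\cdot)$ hiding an absolute constant. *)

theory Defs
  imports Complex_Main
begin

definition sum_free :: "nat set \<Rightarrow> bool" where
  "sum_free A \<longleftrightarrow> (\<forall>x\<in>A. \<forall>y\<in>A. \<forall>z\<in>A. x + y \<noteq> z)"

end

theory Submission
  imports Defs
begin

definition tgt :: "nat \<Rightarrow> nat \<Rightarrow> nat set set" where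
  "tgt n m = {A. A \<subseteq> {1..n} \<and> card A = m \<and> sum_free A}"

lemma construction:
  fixes N m K t :: nat
  assumes t1: "K*K \<le> t" and tN: "t + K*K \<le> N" and t3: "3*t < N + 2"
  shows "(\<Sum>j\<in>{j. j \<le> m \<and> j \<le> K}. (2*t choose j) * ((N - t - K*K) choose (m - j)))
          \<le> card (tgt (2*N) m)"
proof -
  define S where "S = {N-t<..N+t}"
  define R where "R = {N+t<..2*N}"
  define Fb where "Fb = (\<lambda>P::nat set. (\<lambda>(x,y). x+y) ` (P \<times> P))"
  define J where "J = {j. j \<le> m \<and> j \<le> K}"
  define M where "M = N - t - K*K"
  define Ps where "Ps = (\<lambda>j. {P. P \<subseteq> S \<and> card P = j})"
  define Ws where "Ws = (\<lambda>j P. {W. W \<subseteq> R - Fb P \<and> card W = m - j})"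
  define X where "X = (SIGMA j:J. SIGMA P:Ps j. Ws j P)"
  define f where "f = (\<lambda>(j::nat, P::nat set, W::nat set). P \<union> W)"
  have finJ: "finite J" unfolding J_def by auto
  have finS: "finite S" "card S = 2*t" unfolding S_def using tN by auto
  have finR: "finite R" "card R = N - t" unfolding R_def by auto
  have finPs: "finite (Ps j)" for j unfolding Ps_def using finS by auto
  have finWs: "finite (Ws j P)" for j P unfolding Ws_def using finR by auto
  have SR: "S \<inter> R = {}" unfolding S_def R_def by auto
  have inj: "inj_on f X"
  proof (rule inj_onI)
    fix a b assume a: "a \<in> X" and b: "b \<in> X" and e: "f a = f b"
    obtain j P W where aa: "a = (j,P,W)" by (cases a) auto
    obtain j' P' W' where bb: "b = (j',P',W')" by (cases b) auto
    have h: "P \<subseteq> S" "W \<subseteq> R" "card P = j" "P' \<subseteq> S" "W' \<subseteq> R" "card P' = j'"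
      using a b unfolding aa bb X_def Ps_def Ws_def by auto
    have eq: "P \<union> W = P' \<union> W'" using e unfolding aa bb f_def by simp
    have "P = (P \<union> W) \<inter> S" using h SR by blast
    moreover have "P' = (P' \<union> W') \<inter> S" using h SR by blast
    ultimately have PP: "P = P'" using eq by simp
    have "W = (P \<union> W) \<inter> R" using h SR by blast
    moreover have "W' = (P' \<union> W') \<inter> R" using h SR by blast
    ultimately have "W = W'" using eq by simp
    then show "a = b" using PP h unfolding aa bb by simp
  qed
  have sub: "f ` X \<subseteq> tgt (2*N) m"
  proof
    fix A assume "A \<in> f ` X"
    then obtain j P W where jPW: "(j,P,W) \<in> X" and A: "A = P \<union> W" unfolding f_def by auto
    have h: "P \<subseteq> S" "W \<subseteq> R" "card P = j" "W \<inter> Fb P = {}" "card W = m - j" "j \<le> m"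
      using jPW unfolding X_def Ps_def Ws_def J_def by auto
    have sub1: "A \<subseteq> {1..2*N}" using h tN unfolding A S_def R_def by auto
    have "finite P" "finite W" using h finS finR finite_subset by auto
    have "card A = card P + card W" unfolding A
      using card_Un_disjoint[OF \<open>finite P\<close> \<open>finite W\<close>] h SR by blast
    then have cA: "card A = m" using h by simp
    have sf: "sum_free A" unfolding sum_free_def
    proof (intro ballI)
      fix x y z assume x: "x \<in> A" and y: "y \<in> A" and z: "z \<in> A"
      show "x + y \<noteq> z"
      proof
        assume xyz: "x + y = z"
        have allg: "\<forall>a\<in>A. a > N - t"
        proof
          fix a assume "a \<in> A"
          then consider "a \<in> P" | "a \<in> W" unfolding A by auto
          then show "a > N - t"
          proof cases
            case 1 then show ?thesis using h unfolding S_def by auto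
          next
            case 2 then have "a > N + t" using h unfolding R_def by auto
            then show ?thesis by linarith
          qed
        qed
        have gx: "x > N - t" "y > N - t" using x y allg by auto
        have "z > N + t" using gx xyz t3 by linarith
        then have zW: "z \<in> W" using z h unfolding A S_def by auto
        have zle: "z \<le> 2*N" using zW h unfolding R_def by auto
        have "x \<notin> W" using gx xyz zle h unfolding R_def by auto
        moreover have "y \<notin> W" using gx xyz zle h unfolding R_def by auto
        ultimately have "x \<in> P" "y \<in> P" using x y A by auto
        then have "z \<in> Fb P" unfolding Fb_def using xyz by force
        then show False using zW h by auto
      qed
    qed
    show "A \<in> tgt (2*N) m" unfolding tgt_def using sub1 cA sf by auto
  qed
  have "card X = (\<Sum>j\<in>J. \<Sum>P\<in>Ps j. card (Ws j P))"
    unfolding X_def using finJ finPs finWs by (simp add: card_SigmaI)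
  also have "\<dots> \<ge> (\<Sum>j\<in>J. \<Sum>P\<in>Ps j. (M choose (m - j)))"
  proof (intro sum_mono)
    fix j P assume j: "j \<in> J" and P: "P \<in> Ps j"
    have hP: "P \<subseteq> S" "card P = j" "j \<le> K" using j P unfolding J_def Ps_def by auto
    have "card (Fb P) \<le> card (P \<times> P)" unfolding Fb_def
      by (rule card_image_le) (use hP finS finite_subset in auto)
    also have "\<dots> = j * j" using hP by (simp add: card_cartesian_product)
    also have "\<dots> \<le> K * K" using hP by (simp add: mult_mono)
    finally have cF: "card (Fb P) \<le> K*K" .
    have fP: "finite P" using hP finS finite_subset by auto
    have "finite (Fb P)" unfolding Fb_def using fP by auto
    then have "card R - card (Fb P) \<le> card (R - Fb P)" by (rule diff_card_le_card_Diff)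
    then have "M \<le> card (R - Fb P)" using cF finR unfolding M_def by linarith
    then have "M choose (m - j) \<le> card (R - Fb P) choose (m - j)" by (rule binomial_right_mono)
    also have "\<dots> = card (Ws j P)" unfolding Ws_def
      by (rule n_subsets[symmetric]) (use finR in auto)
    finally show "M choose (m - j) \<le> card (Ws j P)" .
  qed
  also have "(\<Sum>j\<in>J. \<Sum>P\<in>Ps j. (M choose (m - j))) = (\<Sum>j\<in>J. (2*t choose j) * (M choose (m - j)))"
  proof (intro sum.cong refl)
    fix j assume "j \<in> J"
    have "card (Ps j) = 2*t choose j" unfolding Ps_def using n_subsets[OF finS(1)] finS(2) by simp
    then show "(\<Sum>P\<in>Ps j. (M choose (m - j))) = (2*t choose j) * (M choose (m - j))" by simp
  qed
  finally have "(\<Sum>j\<in>J. (2*t choose j) * (M choose (m - j))) \<le> card X" .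
  also have "card X = card (f ` X)" using card_image[OF inj] by simp
  also have "\<dots> \<le> card (tgt (2*N) m)"
    by (rule card_mono[OF _ sub]) (simp add: tgt_def)
  finally show ?thesis unfolding J_def M_def .
qed


lemma small_regime:
  fixes N m :: nat
  shows "N choose m \<le> card (tgt (2*N) m)"
    and "1 \<le> m \<Longrightarrow> 1 \<le> N \<Longrightarrow> (N choose m) + ((N-1) choose (m-1)) \<le> card (tgt (2*N) m)"
proof -
  define Od where "Od = (\<lambda>i::nat. 2*i+1) ` {..<N}"
  define Up where "Up = {N<..2*N}"
  define F1 where "F1 = {A. A \<subseteq> Od \<and> card A = m}"
  define G where "G = {A. A \<subseteq> Up \<and> card A = m}"
  define G' where "G' = {A. A \<subseteq> Up - {2*N} \<and> card A = m}"
  have cOd: "card Od = N" unfolding Od_def by (subst card_image) (auto simp: inj_on_def)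
  have fOd: "finite Od" unfolding Od_def by auto
  have cF1: "card F1 = N choose m" unfolding F1_def using n_subsets[OF fOd] cOd by simp
  have finT: "finite (tgt (2*N) m)" unfolding tgt_def
    by (rule finite_subset[of _ "Pow {1..2*N}"]) auto
  have F1sub: "F1 \<subseteq> tgt (2*N) m"
  proof
    fix A assume "A \<in> F1"
    then have h: "A \<subseteq> Od" "card A = m" unfolding F1_def by auto
    have "A \<subseteq> {1..2*N}" using h unfolding Od_def by auto
    moreover have "sum_free A" unfolding sum_free_def
    proof (intro ballI)
      fix x y z assume "x \<in> A" "y \<in> A" "z \<in> A"
      then have "odd x" "odd y" "odd z" using h unfolding Od_def by auto
      then show "x + y \<noteq> z" by auto
    qed
    ultimately show "A \<in> tgt (2*N) m" using h unfolding tgt_def by auto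
  qed
  show "N choose m \<le> card (tgt (2*N) m)" using card_mono[OF finT F1sub] cF1 by simp
  assume m1: "1 \<le> m" and N1: "1 \<le> N"
  have fUp: "finite Up" "card Up = N" unfolding Up_def by auto
  have cUp': "card (Up - {2*N}) = N - 1" using fUp N1 unfolding Up_def by auto
  have cG: "card G = N choose m" unfolding G_def using n_subsets[OF fUp(1)] fUp by simp
  have cG': "card G' = (N-1) choose m" unfolding G'_def using n_subsets[of "Up - {2*N}"] fUp cUp' by simp
  have G'G: "G' \<subseteq> G" unfolding G_def G'_def by auto
  have fG: "finite G" unfolding G_def using fUp by auto
  have cD: "card (G - G') = (N choose m) - ((N-1) choose m)"
    using card_Diff_subset[OF finite_subset[OF G'G fG] G'G] cG cG' by simp
  have DT: "G - G' \<subseteq> tgt (2*N) m"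
  proof
    fix A assume "A \<in> G - G'"
    then have h: "A \<subseteq> Up" "card A = m" unfolding G_def by auto
    have "A \<subseteq> {1..2*N}" using h unfolding Up_def by auto
    moreover have "sum_free A" unfolding sum_free_def
    proof (intro ballI)
      fix x y z assume "x \<in> A" "y \<in> A" "z \<in> A"
      then have "x > N" "y > N" "z \<le> 2*N" using h unfolding Up_def by auto
      then show "x + y \<noteq> z" by auto
    qed
    ultimately show "A \<in> tgt (2*N) m" using h unfolding tgt_def by auto
  qed
  have disj: "F1 \<inter> (G - G') = {}"
  proof (rule ccontr)
    assume "F1 \<inter> (G - G') \<noteq> {}"
    then obtain A where A: "A \<in> F1" "A \<in> G" "A \<notin> G'" by auto
    then have "2*N \<in> A" unfolding G_def G'_def by auto
    moreover have "\<forall>x\<in>A. odd x" using A unfolding F1_def Od_def by auto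
    ultimately show False by auto
  qed
  have "card (F1 \<union> (G - G')) = card F1 + card (G - G')"
    by (rule card_Un_disjoint) (use fOd fG disj in \<open>auto simp: F1_def\<close>)
  moreover have "card (F1 \<union> (G - G')) \<le> card (tgt (2*N) m)"
    using card_mono[OF finT] F1sub DT by auto
  moreover have "(N choose m) - ((N-1) choose m) = (N-1) choose (m-1)"
  proof -
    obtain N' m' where "N = Suc N'" "m = Suc m'" using m1 N1 by (metis Suc_le_D One_nat_def)
    then show ?thesis by simp
  qed
  ultimately show "(N choose m) + ((N-1) choose (m-1)) \<le> card (tgt (2*N) m)"
    using cF1 cD by simp
qed

lemma sum_j_choose:
  fixes a b m :: nat
  assumes "1 \<le> m" "1 \<le> a"
  shows "(\<Sum>j\<le>m. j * ((a choose j) * (b choose (m - j)))) = a * ((a + b - 1) choose (m - 1))"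
proof -
  obtain a' m' where am: "a = Suc a'" "m = Suc m'" using assms by (metis Suc_le_D One_nat_def)
  have "(\<Sum>j\<le>m. j * ((a choose j) * (b choose (m - j))))
      = (\<Sum>i\<le>m'. Suc i * ((a choose Suc i) * (b choose (m' - i))))"
    unfolding am by (subst sum.atMost_Suc_shift) simp
  also have "\<dots> = (\<Sum>i\<le>m'. a * ((a' choose i) * (b choose (m' - i))))"
  proof (intro sum.cong refl)
    fix i
    have "Suc i * (a choose Suc i) = a * (a' choose i)" using binomial_absorption[of i a] am by simp
    then show "Suc i * ((a choose Suc i) * (b choose (m' - i))) = a * ((a' choose i) * (b choose (m' - i)))"
      by (metis mult.assoc)
  qed
  also have "\<dots> = a * ((a' + b) choose m')" by (simp add: sum_distrib_left[symmetric] vandermonde)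
  finally show ?thesis using am by simp
qed

lemma tail_bound:
  fixes a b m K :: nat
  assumes "1 \<le> m" "1 \<le> a"
  shows "real (Suc K) * real ((a + b) choose m) \<le>
         real (Suc K) * (\<Sum>j\<in>{j. j \<le> m \<and> j \<le> K}. real ((a choose j) * (b choose (m - j))))
         + real a * real ((a + b - 1) choose (m - 1))"
proof -
  define f where "f = (\<lambda>j. real ((a choose j) * (b choose (m - j))))"
  have f0: "f j \<ge> 0" for j unfolding f_def by simp
  have V: "(\<Sum>j\<le>m. f j) = real ((a + b) choose m)"
  proof -
    have "(\<Sum>j\<le>m. f j) = real (\<Sum>j\<le>m. (a choose j) * (b choose (m - j)))"
      unfolding f_def by (simp only: of_nat_sum)
    then show ?thesis by (simp only: vandermonde)
  qed
  have W: "(\<Sum>j\<le>m. real j * f j) = real a * real ((a + b - 1) choose (m - 1))"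
    using sum_j_choose[OF assms, of b] unfolding f_def by (simp flip: of_nat_sum of_nat_mult)
  have split: "{..m} = {j. j \<le> m \<and> j \<le> K} \<union> {j. j \<le> m \<and> K < j}" by auto
  have V2: "(\<Sum>j\<le>m. f j) = (\<Sum>j\<in>{j. j \<le> m \<and> j \<le> K}. f j) + (\<Sum>j\<in>{j. j \<le> m \<and> K < j}. f j)"
    by (subst split, rule sum.union_disjoint) auto
  have "real (Suc K) * (\<Sum>j\<in>{j. j \<le> m \<and> K < j}. f j) = (\<Sum>j\<in>{j. j \<le> m \<and> K < j}. real (Suc K) * f j)"
    by (simp add: sum_distrib_left)
  also have "\<dots> \<le> (\<Sum>j\<in>{j. j \<le> m \<and> K < j}. real j * f j)"
    by (intro sum_mono mult_right_mono f0) auto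
  also have "\<dots> \<le> (\<Sum>j\<le>m. real j * f j)"
    by (rule sum_mono2) (auto intro: mult_nonneg_nonneg f0)
  finally have "real (Suc K) * (\<Sum>j\<in>{j. j \<le> m \<and> K < j}. f j) \<le> (\<Sum>j\<le>m. real j * f j)" .
  then have "real (Suc K) * (\<Sum>j\<in>{j. j \<le> m \<and> K < j}. f j) \<le> real a * real ((a + b - 1) choose (m - 1))"
    using W by simp
  moreover have "real (Suc K) * real ((a + b) choose m) = real (Suc K) * (\<Sum>j\<in>{j. j \<le> m \<and> j \<le> K}. f j)
      + real (Suc K) * (\<Sum>j\<in>{j. j \<le> m \<and> K < j}. f j)"
  proof -
    have "real ((a + b) choose m) = (\<Sum>j\<in>{j. j \<le> m \<and> j \<le> K}. f j) + (\<Sum>j\<in>{j. j \<le> m \<and> K < j}. f j)"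
      using V V2 by simp
    then show ?thesis by (simp only: distrib_left)
  qed
  ultimately show ?thesis unfolding f_def by linarith
qed

lemma grow_step:
  fixes a m :: nat and B :: real
  assumes "real (a+1) \<le> B"
  shows "(1 + real m / B) * real (a choose m) \<le> real (Suc a choose m)"
proof (cases "m \<le> a")
  case False then have "a choose m = 0" by (intro binomial_eq_0) simp
  then have "(1 + real m / B) * real (a choose m) = 0" by simp
  then show ?thesis by (metis of_nat_0_le_iff)
next
  case True
  have e: "real (Suc a - m) * real (Suc a choose m) = real (Suc a) * real (a choose m)"
    using binomial_absorb_comp[of "Suc a" m] by (metis diff_Suc_1 of_nat_mult)
  have pos: "real (Suc a) > 0" by simp
  have "(1 + real m / B) * real (a choose m) \<le> (1 + real m / real (Suc a)) * real (a choose m)"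
    using assms by (intro mult_right_mono add_left_mono divide_left_mono) auto
  also have "\<dots> = (real (Suc a) + m) * real (a choose m) / real (Suc a)" using pos by (simp add: field_simps)
  also have "\<dots> = (real (Suc a) + m) * (real (Suc a - m) * real (Suc a choose m)) / (real (Suc a))^2"
  proof -
    have c0: "real (a choose m) = real (Suc a - m) * real (Suc a choose m) / real (Suc a)"
      using e pos by (simp add: field_simps)
    show ?thesis unfolding c0 using pos by (simp add: power2_eq_square)
  qed
  also have "\<dots> \<le> real (Suc a choose m)"
  proof -
    have "(real (Suc a) + m) * real (Suc a - m) \<le> (real (Suc a))^2"
      using True by (simp add: of_nat_diff power2_eq_square algebra_simps)
    then have "(real (Suc a) + m) * real (Suc a - m) * real (Suc a choose m) \<le> (real (Suc a))^2 * real (Suc a choose m)"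
      by (intro mult_right_mono) auto
    then show ?thesis using pos by (simp add: field_simps)
  qed
  finally show ?thesis .
qed

lemma grow:
  fixes N m s :: nat and B :: real
  assumes "real (N+s) \<le> B" "B > 0"
  shows "(1 + real m / B)^s * real (N choose m) \<le> real ((N+s) choose m)"
  using assms(1)
proof (induction s)
  case 0 then show ?case by simp
next
  case (Suc s)
  have "(1 + real m / B)^(Suc s) * real (N choose m) = (1 + real m / B) * ((1 + real m / B)^s * real (N choose m))"
    by simp
  also have "\<dots> \<le> (1 + real m / B) * real ((N+s) choose m)"
    using Suc assms(2) by (intro mult_left_mono) (auto intro: add_nonneg_nonneg)
  also have "\<dots> \<le> real (Suc (N+s) choose m)" using grow_step[of "N+s" B m] Suc by simp
  finally show ?case by simp
qed


lemma powr_le_exp: "y \<ge> 0 \<Longrightarrow> 2 powr y \<le> exp (y::real)"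
proof -
  assume y: "y \<ge> 0"
  have "2 powr y = exp (y * ln 2)" by (simp add: powr_def mult.commute)
  also have "\<dots> \<le> exp y" using y ln_2_less_1 by (simp add: mult_left_le)
  finally show ?thesis .
qed

lemma main_bound:
  fixes n m :: nat
  assumes ev: "even n" and sq: "real m \<ge> sqrt (real n)"
  shows "2 powr ((1/2^22) * real n / real m) * real ((n div 2) choose m) \<le> real (card (tgt n m))"
proof -
  define c :: real where "c = 1/2^22"
  define N where "N = n div 2"
  have nN: "n = 2*N" using ev unfolding N_def by auto
  have m2: "real n \<le> (real m)^2"
  proof -
    have "sqrt (real n) ^2 \<le> (real m)^2" using sq by (intro power_mono) auto
    then show ?thesis by simp
  qed
  have m2N: "2 * real N \<le> real m * real m" using m2 nN by (simp add: power2_eq_square)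
  have cnm: "c * real n / real m = 2 * c * real N / real m" using nN by simp
  show ?thesis
  proof (cases "m = 0")
    case True
    then show ?thesis using small_regime(1)[of N 0] nN unfolding N_def by simp
  next
    case m0: False
    show ?thesis
    proof (cases "m \<le> N")
      case False
      then have "(n div 2) choose m = 0" unfolding N_def by (intro binomial_eq_0) simp
      then have z: "2 powr ((1/2^22) * real n / real m) * real ((n div 2) choose m) = 0" by (simp only: of_nat_0 mult_zero_right)
      show ?thesis by (subst z) simp
    next
      case mN: True
      have m1: "1 \<le> m" using m0 by simp
      have N1: "1 \<le> N" using m1 mN by simp
      have mr: "real m > 0" "real N > 0" using m1 N1 by auto
      define K where "K = N div (8*m)"
      have K1: "real K \<le> real N / (8 * real m)"
      proof -
        have "K * (8*m) \<le> N" unfolding K_def by (rule div_times_less_eq_dividend)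
        then have "real (K * (8*m)) \<le> real N" by (simp only: of_nat_le_iff)
        then have "real K * (8 * real m) \<le> real N" by simp
        then show ?thesis using mr by (simp add: field_simps)
      qed
      have K2: "real N / (8 * real m) < real K + 1"
      proof -
        have "N < (N div (8*m) + 1) * (8*m)"
        proof -
          have "N mod (8*m) < 8*m" using m1 by simp
          then show ?thesis using div_mult_mod_eq[of N "8*m"] by (simp add: algebra_simps)
        qed
        then have "real N < real ((K + 1) * (8 * m))" unfolding K_def by (simp only: of_nat_less_iff)
        then have "real N < (real K + 1) * (8 * real m)" by (simp add: algebra_simps)
        then show ?thesis using mr by (simp add: divide_less_eq)
      qed
      define C where "C = real (N choose m)"
      have C0: "C \<ge> 0" unfolding C_def by simp
      show ?thesis
      proof (cases "K < 72")
        case True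
        have q: "real N < 576 * real m"
        proof -
          have "real N / (8 * real m) < 72" using K2 True by linarith
          then show ?thesis using mr by (simp add: divide_less_eq)
        qed
        have ab: "real m * C = real N * real ((N-1) choose (m-1))"
        proof -
          have "Suc (m-1) * (N choose Suc (m-1)) = N * ((N - 1) choose (m-1))" by (rule binomial_absorption)
          then have "m * (N choose m) = N * ((N - 1) choose (m-1))" using m1 by simp
          then have "real (m * (N choose m)) = real (N * ((N - 1) choose (m-1)))" by (simp only:)
          then show ?thesis unfolding C_def by simp
        qed
        have lower: "C * (1 + real m / real N) \<le> real (card (tgt n m))"
        proof -
          have "C * (1 + real m / real N) = C + real ((N-1) choose (m-1))"
            using ab mr by (simp add: field_simps)
          also have "\<dots> \<le> real (card (tgt n m))"
          proof -
            have "(N choose m) + ((N-1) choose (m-1)) \<le> card (tgt n m)" using small_regime(2)[OF m1 N1] nN by simp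
            then have "real ((N choose m) + ((N-1) choose (m-1))) \<le> real (card (tgt n m))" by (simp only: of_nat_le_iff)
            then show ?thesis unfolding C_def by simp
          qed
          finally show ?thesis .
        qed
        define y where "y = 2 * c * real N / real m"
        have y0: "y \<ge> 0" unfolding y_def c_def by simp
        have yb: "y \<le> 1152 * c"
        proof -
          have "real N / real m < 576" using q mr by (simp add: divide_less_eq)
          then have "2 * c * (real N / real m) \<le> 2 * c * 576" unfolding c_def by (intro mult_left_mono) auto
          then show ?thesis unfolding y_def by simp
        qed
        have "2 powr y \<le> exp y" by (rule powr_le_exp[OF y0])
        also have "\<dots> \<le> 1 + 2 * y"
        proof -
          have "norm y \<le> 1/2" using yb y0 unfolding c_def by simp
          from exp_bound_lemma[OF this] show ?thesis using y0 by simp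
        qed
        also have "\<dots> \<le> 1 + real m / real N"
        proof -
          have "4 * c * real N * real N \<le> 4 * c * (576 * real m) * (576 * real m)"
            using q mr unfolding c_def by (intro mult_mono) auto
          also have "\<dots> \<le> real m * real m" unfolding c_def by simp
          finally have "4 * c * real N * real N \<le> real m * real m" .
          then have "2 * y \<le> real m / real N" unfolding y_def using mr
            by (simp add: field_simps)
          then show ?thesis by simp
        qed
        finally have "2 powr y \<le> 1 + real m / real N" .
        then have "2 powr y * C \<le> C * (1 + real m / real N)" using C0 by (simp add: mult.commute mult_left_mono)
        with lower show ?thesis unfolding y_def C_def c_def[symmetric] cnm N_def by simp
      next
        case False
        then have K72: "real K \<ge> 72" by simp
        define t where "t = K*N div (4*m)"
        have t1: "real t \<le> real K * real N / (4 * real m)"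
        proof -
          have "t * (4*m) \<le> K * N" unfolding t_def by (rule div_times_less_eq_dividend)
          then have "real (t * (4*m)) \<le> real (K * N)" by (simp only: of_nat_le_iff)
          then have "real t * (4 * real m) \<le> real K * real N" by simp
          then show ?thesis using mr by (simp add: field_simps)
        qed
        have t2: "real K * real N / (4 * real m) < real t + 1"
        proof -
          have "K*N < (K*N div (4*m) + 1) * (4*m)"
          proof -
            have "(K*N) mod (4*m) < 4*m" using m1 by simp
            then show ?thesis using div_mult_mod_eq[of "K*N" "4*m"] by (simp add: algebra_simps)
          qed
          then have "real (K*N) < real ((t + 1) * (4 * m))" unfolding t_def by (simp only: of_nat_less_iff)
          then have "real K * real N < (real t + 1) * (4 * real m)" by (simp add: algebra_simps)
          then show ?thesis using mr by (simp add: divide_less_eq)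
        qed
        have NK: "8 * real K * real m \<le> real N" using K1 mr by (simp add: field_simps)
        have tK: "2 * real K * real K \<le> real t"
        proof -
          have "2 * real K * real K = real K * (8 * real K * real m) / (4 * real m)" using mr by (simp add: field_simps)
          also have "\<dots> \<le> real K * real N / (4 * real m)" using NK mr by (intro divide_right_mono mult_left_mono) auto
          finally have "2 * real K * real K < real t + 1" using t2 by linarith
          then have "real (2 * K * K) < real (t + 1)" by simp
          then have "2 * K * K < t + 1" by (simp only: of_nat_less_iff)
          then have "2 * K * K \<le> t" by linarith
          then have "real (2 * K * K) \<le> real t" by (simp only: of_nat_le_iff)
          then show ?thesis by simp
        qed
        have tN: "64 * real t \<le> real N"
        proof -
          have "64 * real t \<le> 16 * real K * real N / real m" using t1 mr by (simp add: field_simps)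
          also have "\<dots> = (16 * real K) * (real N / real m)" by simp
          also have "\<dots> \<le> (2 * real N / real m) * (real N / real m)"
          proof -
            have "16 * real K \<le> 2 * real N / real m" using K1 mr by (simp add: field_simps)
            then show ?thesis using mr by (intro mult_right_mono) auto
          qed
          also have "\<dots> = real N * (2 * real N) / (real m * real m)" by simp
          also have "\<dots> \<le> real N * (real m * real m) / (real m * real m)"
            using m2N mr by (intro divide_right_mono mult_left_mono) auto
          also have "\<dots> = real N" using mr by simp
          finally show ?thesis .
        qed
        have c1: "K*K \<le> t"
        proof -
          have "real (K*K) \<le> real t" using tK by simp
          then show ?thesis by linarith
        qed
        have c2: "t + K*K \<le> N"
        proof -
          have "real (t + K*K) \<le> real N" using tK tN by simp
          then show ?thesis by linarith
        qed
        have c3: "3*t < N + 2" using tN by linarith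
        define M where "M = N - t - K*K"
        define T where "T = 2*t + M"
        define s where "s = t - K*K"
        have TNs: "T = N + s" unfolding T_def M_def s_def using c1 c2 by simp
        have tpos: "1 \<le> 2*t"
        proof -
          have "(1::real) * 1 \<le> real K * real K" using K72 by (intro mult_mono) auto
          then have "real 1 \<le> real (2*t)" using tK by simp
          then show ?thesis by linarith
        qed
        have constr: "(\<Sum>j\<in>{j. j \<le> m \<and> j \<le> K}. real ((2*t choose j) * (M choose (m - j)))) \<le> real (card (tgt n m))"
        proof -
          have "(\<Sum>j\<in>{j. j \<le> m \<and> j \<le> K}. (2*t choose j) * (M choose (m - j))) \<le> card (tgt n m)"
            using construction[OF c1 c2 c3, of m] nN unfolding M_def by simp
          then have "real (\<Sum>j\<in>{j. j \<le> m \<and> j \<le> K}. (2*t choose j) * (M choose (m - j))) \<le> real (card (tgt n m))"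
            by (simp only: of_nat_le_iff)
          then show ?thesis by (simp only: of_nat_sum)
        qed
        have tb: "real (Suc K) * real (T choose m) \<le>
            real (Suc K) * (\<Sum>j\<in>{j. j \<le> m \<and> j \<le> K}. real ((2*t choose j) * (M choose (m - j))))
            + real (2*t) * real ((T - 1) choose (m - 1))"
          using tail_bound[OF m1 tpos, where b=M and K=K] unfolding T_def by simp
        have TN: "real T \<ge> real N" using TNs by simp
        have absT: "real T * real ((T-1) choose (m-1)) = real m * real (T choose m)"
        proof -
          have "Suc (m-1) * (T choose Suc (m-1)) = T * ((T - 1) choose (m-1))" by (rule binomial_absorption)
          then have "m * (T choose m) = T * ((T - 1) choose (m-1))" using m1 by simp
          then have "real (m * (T choose m)) = real (T * ((T - 1) choose (m-1)))" by (simp only:)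
          then show ?thesis by simp
        qed
        have TC0: "real (T choose m) \<ge> 0" by simp
        have "real (2*t) * real ((T - 1) choose (m - 1)) = 2 * real t * real m * real (T choose m) / real T"
          using absT TN mr by (simp add: field_simps)
        also have "\<dots> \<le> real (Suc K) / 2 * real (T choose m)"
        proof -
          have "4 * real t * real m \<le> real K * real N" using t1 mr by (simp add: field_simps)
          also have "\<dots> \<le> real (Suc K) * real T" using TN by (simp add: mult_mono)
          finally have "2 * real t * real m / real T \<le> real (Suc K) / 2" using TN mr by (simp add: field_simps)
          then have "2 * real t * real m / real T * real (T choose m) \<le> real (Suc K) / 2 * real (T choose m)"
            using TC0 by (rule mult_right_mono)
          then show ?thesis by simp
        qed
        finally have "real (Suc K) * real (T choose m) / 2 \<le> real (Suc K) * (\<Sum>j\<in>{j. j \<le> m \<and> j \<le> K}. real ((2*t choose j) * (M choose (m - j))))"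
          using tb by linarith
        then have "real (Suc K) * (real (T choose m) / 2) \<le> real (Suc K) * (\<Sum>j\<in>{j. j \<le> m \<and> j \<le> K}. real ((2*t choose j) * (M choose (m - j))))"
          by simp
        then have "real (T choose m) / 2 \<le> (\<Sum>j\<in>{j. j \<le> m \<and> j \<le> K}. real ((2*t choose j) * (M choose (m - j))))"
          by (rule mult_left_le_imp_le) simp
        then have half: "real (T choose m) / 2 \<le> real (card (tgt n m))" using constr by linarith
        define x where "x = real m / (2 * real N)"
        have x0: "0 \<le> x" "x \<le> 1/2" unfolding x_def using mr mN by (auto simp: field_simps)
        have g: "(1 + x)^s * C \<le> real (T choose m)"
          using grow[of N s "2 * real N" m] TNs c2 mr unfolding x_def C_def s_def by (simp add: of_nat_diff)
        have "exp (real s * (x/2)) \<le> exp (real s * ln (1 + x))"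
        proof -
          have "x - x^2 \<le> ln (1+x)" using x0 by (intro ln_one_plus_pos_lower_bound) auto
          moreover have "x/2 \<le> x - x^2"
          proof -
            have "x * x \<le> x * (1/2)" using x0 by (intro mult_left_mono) auto
            then show ?thesis by (simp add: power2_eq_square)
          qed
          ultimately show ?thesis by (intro exp_le_cancel_iff[THEN iffD2] mult_left_mono) auto
        qed
        also have "\<dots> = (1 + x)^s" using x0 by (subst exp_of_nat_mult) simp
        finally have ex: "exp (real s * (x/2)) \<le> (1 + x)^s" .
        have sK: "real s \<ge> real K * real K" unfolding s_def using c1 tK by (simp add: of_nat_diff)
        have qK: "real N < 9 * real K * real m"
        proof -
          have "real N < (real K + 1) * (8 * real m)" using K2 mr by (simp add: divide_less_eq)
          moreover have "8 * real m \<le> real K * real m" using K72 mr by (intro mult_right_mono) auto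
          ultimately show ?thesis by (simp add: algebra_simps)
        qed
        have eK: "real K / 36 \<le> real s * (x/2)"
        proof -
          have "real K / 36 = real K * real K * real m / (4 * (9 * real K * real m))" using K72 mr by (simp add: field_simps)
          also have "\<dots> \<le> real K * real K * real m / (4 * real N)" using qK mr K72
            by (intro divide_left_mono mult_left_mono) auto
          also have "\<dots> \<le> real s * real m / (4 * real N)" using sK mr by (intro divide_right_mono mult_right_mono) auto
          also have "\<dots> = real s * (x/2)" unfolding x_def by simp
          finally show ?thesis .
        qed
        define y where "y = 2 * c * real N / real m"
        have y0: "y \<ge> 0" unfolding y_def c_def by simp
        have yK: "y \<le> real K / 72"
        proof -
          have "real N / real m < 9 * real K" using qK mr by (simp add: divide_less_eq)
          then have "2 * c * (real N / real m) \<le> 2 * c * (9 * real K)" unfolding c_def by (intro mult_left_mono) auto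
          then show ?thesis unfolding y_def c_def using K72 by simp
        qed
        have two: "2 \<le> exp (real K / 72)" using exp_ge_add_one_self[of "real K / 72"] K72 by linarith
        have "2 powr y * C \<le> exp (real K / 72) * C" using powr_le_exp[OF y0] yK C0
          by (meson exp_le_cancel_iff mult_right_mono order_trans)
        also have "\<dots> \<le> exp (real K / 36) / 2 * C"
        proof -
          have "exp (real K / 36) = exp (real K / 72) * exp (real K / 72)" by (simp flip: exp_add)
          moreover have "2 * exp (real K / 72) \<le> exp (real K / 72) * exp (real K / 72)"
            using two by (intro mult_right_mono) auto
          ultimately have "exp (real K / 72) \<le> exp (real K / 36) / 2" by simp
          then show ?thesis using C0 by (rule mult_right_mono)
        qed
        also have "\<dots> \<le> exp (real s * (x/2)) / 2 * C" using eK C0 by (intro mult_right_mono divide_right_mono) auto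
        also have "\<dots> \<le> (1 + x)^s / 2 * C" using ex C0 by (intro mult_right_mono divide_right_mono) auto
        also have "\<dots> \<le> real (T choose m) / 2" using g by simp
        also have "\<dots> \<le> real (card (tgt n m))" by (rule half)
        finally show ?thesis unfolding y_def C_def c_def[symmetric] cnm N_def by simp
      qed
    qed
  qed
qed


theorem proposition3p1:
  shows "\<exists>c::real. c > 0 \<and> (\<forall>n m :: nat. even n \<longrightarrow> real m \<ge> sqrt (real n) \<longrightarrow>
     real (card {A. A \<subseteq> {1..n} \<and> card A = m \<and> sum_free A})
       \<ge> 2 powr (c * real n / real m) * real ((n div 2) choose m))"
proof (intro exI[of _ "1/2^22"] conjI allI impI)
  fix n m :: nat
  assume "even n" "real m \<ge> sqrt (real n)"
  from main_bound[OF this] show "2 powr ((1/2^22) * real n / real m) * real ((n div 2) choose m)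
      \<le> real (card {A. A \<subseteq> {1..n} \<and> card A = m \<and> sum_free A})" unfolding tgt_def .
qed simp

end
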